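(* Let $G$ be a simple cycle-extendable graph, let $x_0$ be a vertex of degree two in $G$, and let $J'=G/x_0$. Then either $J'$ is simple or $J'$ has exactly two multiple edges (that is, exactly one pair of parallel edges and no other parallel edges). Furthermore, if $G$ is irreducible, then the underlying simple graph of $J'$ is also irreducible.
   Context: A graph is matching covered if it is connected, has at least two vertices, and every edge lies in some perfect matching; it is cycle-extendable if moreover for every even cycle $C$ the graph $G-V(C)$ has a perfect matching. $G/x_0$ is the graph obtained from $G$ by contracting both edges incident with the degree-two vertex $x_0$ into a single vertex (parallel edges may arise). A graph is irreducible if it is simple and its vertices of degree two form a stable set. *)

theory Defs
  imports Main "HOL-Library.Multiset"
begin

definition simple_graph :: "'a set \<Rightarrow> 'a set set \<Rightarrow> bool" where
  "simple_graph V E \<longleftrightarrow> finite V \<and>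
     (\<forall>e\<in>E. \<exists>a b. a \<noteq> b \<and> a \<in> V \<and> b \<in> V \<and> e = {a, b})"

definition perfect_matching :: "'a set \<Rightarrow> 'a set set \<Rightarrow> 'a set set \<Rightarrow> bool" where
  "perfect_matching V E M \<longleftrightarrow> M \<subseteq> E \<and> (\<forall>v\<in>V. \<exists>!e. e \<in> M \<and> v \<in> e)"

definition has_perfect_matching :: "'a set \<Rightarrow> 'a set set \<Rightarrow> bool" where
  "has_perfect_matching V E \<longleftrightarrow> (\<exists>M. perfect_matching V E M)"

definition graph_connected :: "'a set \<Rightarrow> 'a set set \<Rightarrow> bool" where
  "graph_connected V E \<longleftrightarrow>
     (\<forall>u\<in>V. \<forall>v\<in>V. (u, v) \<in> {(a, b). {a, b} \<in> E}\<^sup>*)"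

definition matching_covered :: "'a set \<Rightarrow> 'a set set \<Rightarrow> bool" where
  "matching_covered V E \<longleftrightarrow> graph_connected V E \<and> 2 \<le> card V \<and>
     (\<forall>e\<in>E. \<exists>M. perfect_matching V E M \<and> e \<in> M)"

definition is_cycle :: "'a set \<Rightarrow> 'a set set \<Rightarrow> 'a list \<Rightarrow> bool" where
  "is_cycle V E cs \<longleftrightarrow> distinct cs \<and> 3 \<le> length cs \<and> set cs \<subseteq> V \<and>
     (\<forall>i < length cs. {cs ! i, cs ! ((i + 1) mod length cs)} \<in> E)"

definition del_edges :: "'a set set \<Rightarrow> 'a set \<Rightarrow> 'a set set" where
  "del_edges E S = {e \<in> E. e \<inter> S = {}}"

definition cycle_extendable :: "'a set \<Rightarrow> 'a set set \<Rightarrow> bool" where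
  "cycle_extendable V E \<longleftrightarrow> matching_covered V E \<and>
     (\<forall>cs. is_cycle V E cs \<and> even (length cs) \<longrightarrow>
        has_perfect_matching (V - set cs) (del_edges E (set cs)))"

definition neighbours :: "'a set set \<Rightarrow> 'a \<Rightarrow> 'a set" where
  "neighbours E v = {u. {v, u} \<in> E}"

definition degree :: "'a set set \<Rightarrow> 'a \<Rightarrow> nat" where
  "degree E v = card (neighbours E v)"

definition irreducible :: "'a set \<Rightarrow> 'a set set \<Rightarrow> bool" where
  "irreducible V E \<longleftrightarrow> simple_graph V E \<and>
     (\<forall>a b. {a, b} \<in> E \<longrightarrow> \<not> (degree E a = 2 \<and> degree E b = 2))"

text \<open>Contraction G/x0: both neighbours of x0 and x0 itself are identified into a single
  vertex, which is named x0. The result is a multigraph whose edges form a multiset of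
  vertex sets (a set of cardinality 1 would be a loop).\<close>
definition contr_map :: "'a set set \<Rightarrow> 'a \<Rightarrow> 'a \<Rightarrow> 'a" where
  "contr_map E x0 v = (if v \<in> neighbours E x0 then x0 else v)"

definition contr_V :: "'a set \<Rightarrow> 'a set set \<Rightarrow> 'a \<Rightarrow> 'a set" where
  "contr_V V E x0 = V - neighbours E x0"

definition contr_E :: "'a set set \<Rightarrow> 'a \<Rightarrow> 'a set multiset" where
  "contr_E E x0 = image_mset (\<lambda>e. contr_map E x0 ` e) (mset_set {e \<in> E. x0 \<notin> e})"

definition mg_simple :: "'a set multiset \<Rightarrow> bool" where
  "mg_simple ME \<longleftrightarrow> (\<forall>e\<in>#ME. card e = 2 \<and> count ME e = 1)"

definition mg_exactly_two_multiple_edges :: "'a set multiset \<Rightarrow> bool" where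
  "mg_exactly_two_multiple_edges ME \<longleftrightarrow>
     card {e. 2 \<le> count ME e} = 1 \<and> (\<forall>e. count ME e \<le> 2)"

definition underlying_simple :: "'a set multiset \<Rightarrow> 'a set set" where
  "underlying_simple ME = {e \<in> set_mset ME. card e = 2}"

end

theory Submission imports Defs begin
definition mate :: "'a set \<Rightarrow> 'a set set \<Rightarrow> 'a \<Rightarrow> 'a" where
  "mate V M v = (if v \<in> V then (THE y. {v, y} \<in> M) else v)"
lemma mate_props:
  assumes sg: "simple_graph V E" and pm: "perfect_matching V E M" and v: "v \<in> V"
  shows "{v, mate V M v} \<in> M" "mate V M v \<in> V" "mate V M v \<noteq> v"
    "\<And>y. {v, y} \<in> M \<Longrightarrow> y = mate V M v"
proof -
  obtain e where e: "e \<in> M" "v \<in> e" and uq: "\<And>e'. e' \<in> M \<and> v \<in> e' \<Longrightarrow> e' = e"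
    using pm v unfolding perfect_matching_def by metis
  have "e \<in> E" using e pm unfolding perfect_matching_def by auto
  then obtain p q where pq: "p \<noteq> q" "p \<in> V" "q \<in> V" "e = {p, q}"
    using sg unfolding simple_graph_def by blast
  obtain y where y: "e = {v, y}" "y \<in> V" "y \<noteq> v" using pq e by auto
  have yu: "z = y" if "{v, z} \<in> M" for z
  proof -
    have "{v, z} = e" using uq that by auto
    then show ?thesis using y by (auto simp: doubleton_eq_iff)
  qed
  have "(THE y. {v, y} \<in> M) = y"
  proof (rule the_equality)
    show "{v, y} \<in> M" using y e by simp
  qed (rule yu)
  then have m: "mate V M v = y" using v by (simp add: mate_def)
  show "{v, mate V M v} \<in> M" "mate V M v \<in> V" "mate V M v \<noteq> v" using m y e by auto
  show "\<And>z. {v, z} \<in> M \<Longrightarrow> z = mate V M v" using yu m by auto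
qed

lemma mate_invol:
  assumes sg: "simple_graph V E" and pm: "perfect_matching V E M"
  shows "mate V M (mate V M v) = v"
proof (cases "v \<in> V")
  case True
  note mp = mate_props[OF sg pm True]
  have "{mate V M v, v} \<in> M" using mp(1) by (simp add: insert_commute)
  then show ?thesis using mate_props(4)[OF sg pm mp(2)] by auto
next
  case False then show ?thesis by (simp add: mate_def)
qed

lemma mate_edge:
  assumes sg: "simple_graph V E" and pm: "perfect_matching V E M" and v: "v \<in> V"
  shows "{v, mate V M v} \<in> E"
  using mate_props(1)[OF sg pm v] pm unfolding perfect_matching_def by auto

lemma alt_cycle:
  fixes m2 m4 :: "'a \<Rightarrow> 'a"
  assumes finV: "finite V"
    and inv2: "\<And>v. m2 (m2 v) = v" and inv4: "\<And>v. m4 (m4 v) = v"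
    and in2: "\<And>v. v \<in> V \<Longrightarrow> m2 v \<in> V" and in4: "\<And>v. v \<in> V \<Longrightarrow> m4 v \<in> V"
    and ne2: "\<And>v. v \<in> V \<Longrightarrow> m2 v \<noteq> v" and ne4: "\<And>v. v \<in> V \<Longrightarrow> m4 v \<noteq> v"
    and e2: "\<And>v. v \<in> V \<Longrightarrow> {v, m2 v} \<in> E" and e4: "\<And>v. v \<in> V \<Longrightarrow> {v, m4 v} \<in> E"
    and u: "u \<in> V" and a: "a \<in> V"
    and m4w: "m4 w = x0" and m2x: "m2 x0 = u" and uw: "u \<noteq> w"
    and ma: "m2 a = m4 a" and au: "a \<noteq> u" and m4u: "m4 u \<noteq> a"
    and ewa: "{w, a} \<in> E" and eau: "{a, u} \<in> E" and ax: "a \<noteq> x0"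
  shows "\<exists>cs. is_cycle V E cs \<and> even (length cs) \<and> u \<in> set cs \<and> w \<in> set cs \<and> x0 \<notin> set cs"
proof -
  define f where "f = (\<lambda>x. m2 (m4 x))"
  define g where "g = (\<lambda>x. m4 (m2 x))"
  have fg: "f (g x) = x" for x by (simp add: f_def g_def inv2 inv4)
  have gf: "g (f x) = x" for x by (simp add: f_def g_def inv2 inv4)
  have fgn: "(f^^n) ((g^^n) x) = x" for n x
  proof (induction n arbitrary: x)
    case (Suc n)
    have "(f^^Suc n) ((g^^Suc n) x) = (f^^n) (f (g ((g^^n) x)))"
      by (simp add: funpow_swap1)
    then show ?case using Suc fg by simp
  qed simp
  have gfn: "(g^^n) ((f^^n) x) = x" for n x
  proof (induction n arbitrary: x)
    case (Suc n)
    have "(g^^Suc n) ((f^^Suc n) x) = (g^^n) (g (f ((f^^n) x)))"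
      by (simp add: funpow_swap1)
    then show ?case using Suc gf by simp
  qed simp
  have gf_sub: "(g^^t) ((f^^(t+d)) x) = (f^^d) x" for t d x
    by (simp only: funpow_add comp_apply gfn)
  have m4f: "m4 ((f^^n) x) = (g^^n) (m4 x)" for n x
    by (induction n) (simp_all add: f_def g_def inv4)
  have fV: "x \<in> V \<Longrightarrow> f x \<in> V" for x by (simp add: f_def in2 in4)
  define F where "F n = (f^^n) u" for n
  have FV: "F n \<in> V" for n by (induction n) (simp_all add: F_def u fV)
  have FSuc: "F (Suc n) = f (F n)" for n by (simp add: F_def)
  have mixed: "F i \<noteq> m4 (F j)" for i j
  proof
    assume h: "F i = m4 (F j)"
    then have "F i = (g^^j) (m4 u)" by (simp add: F_def m4f)
    then have "(f^^j) (F i) = m4 u" by (simp add: fgn)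
    then have s: "m4 u = F (j + i)" by (simp add: F_def funpow_add)
    define s where "s = j + i"
    define t where "t = s div 2"
    have "m4 (F t) = (g^^t) (m4 u)" by (simp add: F_def m4f)
    also have "\<dots> = (g^^t) (F s)" using s s_def by simp
    also have "\<dots> = F (s - t)"
    proof -
      have "s = t + (s - t)" by (simp add: t_def)
      then have "(g^^t) (F s) = (g^^t) ((f^^(t + (s - t))) u)" by (simp add: F_def)
      then show ?thesis by (simp add: gf_sub F_def)
    qed
    finally have mt: "m4 (F t) = F (s - t)" .
    show False
    proof (cases "even s")
      case True
      then have "s - t = t" by (auto simp: t_def)
      then show False using mt ne4[OF FV[of t]] by simp
    next
      case False
      then have "s - t = Suc t" by (auto simp: t_def elim!: oddE)
      then have "m4 (F t) = m2 (m4 (F t))" using mt FSuc by (simp add: f_def)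
      then show False using ne2[OF in4[OF FV[of t]]] by simp
    qed
  qed
  have "\<exists>p>0. F p = u"
  proof -
    have "F ` {..card V} \<subseteq> V" using FV by auto
    then have "\<not> inj_on F {..card V}"
      using card_inj_on_le[of F "{..card V}" V] finV by fastforce
    then obtain i j where ij: "i \<noteq> j" "F i = F j" unfolding inj_on_def by blast
    then have "\<exists>i j. i < j \<and> F i = F j" by (metis linorder_neqE_nat)
    then obtain i j where ij: "i < j" "F i = F j" by blast
    have "(g^^i) (F j) = F (j - i)"
    proof -
      have "j = i + (j - i)" using ij by simp
      then have "(g^^i) (F j) = (g^^i) ((f^^(i + (j - i))) u)" by (simp add: F_def)
      then show ?thesis by (simp add: gf_sub F_def)
    qed
    moreover have "(g^^i) (F i) = u" by (simp add: F_def gfn)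
    ultimately show ?thesis using ij by (metis zero_less_diff)
  qed
  define k where "k = (LEAST p. 0 < p \<and> F p = u)"
  have k: "0 < k" "F k = u" using LeastI_ex[OF \<open>\<exists>p>0. F p = u\<close>] by (simp_all add: k_def)
  have kmin: "0 < p \<Longrightarrow> p < k \<Longrightarrow> F p \<noteq> u" for p
    using not_less_Least[of p "\<lambda>p. 0 < p \<and> F p = u"] by (auto simp: k_def)
  have Finj: "F i = F j \<Longrightarrow> i < k \<Longrightarrow> j < k \<Longrightarrow> i = j" for i j
  proof (rule ccontr)
    assume h: "F i = F j" "i < k" "j < k" "i \<noteq> j"
    have *: "F (j - i) = u" if "i < j" "F i = F j" for i j
    proof -
      have "j = i + (j - i)" using that by simp
      then have "(g^^i) (F j) = (g^^i) ((f^^(i + (j - i))) u)" by (simp add: F_def)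
      then have "(g^^i) (F j) = F (j - i)" by (simp add: gf_sub F_def)
      moreover have "(g^^i) (F i) = u" by (simp add: F_def gfn)
      ultimately show ?thesis using that by simp
    qed
    show False
    proof (cases "i < j")
      case True then show False using *[of i j] h kmin[of "j - i"] by simp
    next
      case False then show False using *[of j i] h kmin[of "i - j"] by simp
    qed
  qed
  have fw: "f w = u" by (simp add: f_def m4w m2x)
  have Fk1: "F (k - 1) = w"
  proof -
    have "f (F (k - 1)) = F k" using FSuc[of "k - 1"] k(1) by simp
    then have "f (F (k - 1)) = f w" using k fw by simp
    then have "g (f (F (k - 1))) = g (f w)" by simp
    then show ?thesis by (simp add: gf)
  qed
  have k2: "2 \<le> k"
  proof (rule ccontr)
    assume "\<not> 2 \<le> k"
    then have "k = 1" using k(1) by simp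
    then show False using Fk1 uw by (simp add: F_def)
  qed
  have ga: "g a = a" by (simp add: g_def ma inv4)
  have gan: "(g^^n) a = a" for n by (induction n) (simp_all add: ga)
  have gc: "g (m4 a) = m4 a" by (simp add: g_def inv4 ma[symmetric] inv2)
  have gcn: "(g^^n) (m4 a) = m4 a" for n by (induction n) (simp_all add: gc)
  have Fna: "F i \<noteq> a" for i
  proof
    assume "F i = a"
    then have "(g^^i) (F i) = a" using gan by simp
    then show False using au by (simp add: F_def gfn)
  qed
  have mFna: "m4 (F i) \<noteq> a" for i
  proof
    assume "m4 (F i) = a"
    then have "F i = m4 a" using inv4 by metis
    then have "(g^^i) (F i) = m4 a" using gcn by simp
    then have "u = m4 a" by (simp add: F_def gfn)
    then show False using m4u inv4 by metis
  qed
  define z where "z i = (if even i then F (i div 2) else m4 (F (i div 2)))" for i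
  have zna: "z i \<noteq> a" for i using Fna mFna by (simp add: z_def)
  have zV: "z i \<in> V" for i using FV in4 by (simp add: z_def)
  have m4inj: "m4 x = m4 y \<Longrightarrow> x = y" for x y using inv4 by metis
  have zinj: "z i = z j \<Longrightarrow> i < 2 * k \<Longrightarrow> j < 2 * k \<Longrightarrow> i = j" for i j
  proof -
    assume h: "z i = z j" "i < 2 * k" "j < 2 * k"
    have id: "i div 2 < k" "j div 2 < k" using h by auto
    show "i = j"
    proof (cases "even i"; cases "even j")
      assume "even i" "even j"
      then have "F (i div 2) = F (j div 2)" using h by (simp add: z_def)
      then have "i div 2 = j div 2" using Finj id by blast
      then show ?thesis using \<open>even i\<close> \<open>even j\<close> by (metis dvd_mult_div_cancel)
    next
      assume "\<not> even i" "\<not> even j"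
      then have "F (i div 2) = F (j div 2)" using h m4inj by (simp add: z_def)
      then have "i div 2 = j div 2" using Finj id by blast
      then show ?thesis using \<open>\<not> even i\<close> \<open>\<not> even j\<close>
        by (metis odd_two_times_div_two_succ)
    next
      assume "even i" "\<not> even j"
      then show ?thesis using h mixed by (simp add: z_def)
    next
      assume "\<not> even i" "even j"
      then show ?thesis using h mixed by (simp add: z_def) metis
    qed
  qed
  define h where "h i = (if i = 2 * k - 1 then a else z i)" for i
  define cs where "cs = map h [0..<2 * k]"
  have len: "length cs = 2 * k" by (simp add: cs_def)
  have csn: "i < 2 * k \<Longrightarrow> cs ! i = h i" for i by (simp add: cs_def)
  have hinj: "inj_on h {0..<2 * k}"
  proof (rule inj_onI)
    fix i j assume i: "i \<in> {0..<2 * k}" and j: "j \<in> {0..<2 * k}" and e: "h i = h j"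
    show "i = j"
    proof (cases "i = 2 * k - 1"; cases "j = 2 * k - 1")
      assume "i \<noteq> 2 * k - 1" "j \<noteq> 2 * k - 1"
      then show ?thesis using e i j zinj by (simp add: h_def)
    qed (use e zna in \<open>auto simp: h_def\<close>)
  qed
  have dist: "distinct cs" unfolding cs_def using hinj by (simp add: distinct_map)
  have setV: "set cs \<subseteq> V" using zV a by (auto simp: cs_def h_def)
  have zF: "z (2 * n) = F n" for n by (simp add: z_def)
  have zm: "z (Suc (2 * n)) = m4 (F n)" for n by (simp add: z_def)
  have edges: "{cs ! i, cs ! ((i + 1) mod length cs)} \<in> E" if i: "i < length cs" for i
  proof -
    have h0: "h 0 = u" using k2 by (simp add: h_def z_def F_def)
    show ?thesis
    proof (cases "i = 2 * k - 1")
      case True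
      then have "(i + 1) mod length cs = 0" using len k2 by simp
      then show ?thesis using True csn[of i] csn[of 0] h0 i len k2 eau
        by (simp add: h_def)
    next
      case False
      then have ii: "(i + 1) mod length cs = i + 1" "i + 1 < 2 * k" using i len by auto
      show ?thesis
      proof (cases "i + 1 = 2 * k - 1")
        case True
        then have "i = 2 * (k - 1)" using k2 by simp
        then have "h i = w" using False Fk1 by (simp add: h_def zF)
        then show ?thesis using ii True csn[of i] csn[of "i+1"] ewa by (simp add: h_def)
      next
        case False2: False
        then have hh: "cs ! i = z i" "cs ! ((i + 1) mod length cs) = z (i + 1)"
          using ii False csn[of i] csn[of "i+1"] by (simp_all add: h_def)
        show ?thesis
        proof (cases "even i")
          case True
          then obtain n where n: "i = 2 * n" by blast
          then show ?thesis using hh e4[OF FV[of n]] by (simp add: zF zm)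
        next
          case False
          then obtain n where n: "i = Suc (2 * n)" by (metis oddE Suc_eq_plus1)
          have "z (i + 1) = F (Suc n)" using n zF[of "Suc n"] by simp
          then have "z (i + 1) = m2 (m4 (F n))" by (simp add: FSuc f_def)
          then show ?thesis using hh n e2[OF in4[OF FV[of n]]] by (simp add: zm)
        qed
      qed
    qed
  qed
  have cyc: "is_cycle V E cs" unfolding is_cycle_def using dist len k2 setV edges by auto
  have uin: "u \<in> set cs"
  proof -
    have "cs ! 0 = u" using csn[of 0] k2 by (simp add: h_def z_def F_def)
    then show ?thesis using len k2 by (metis nth_mem mult_pos_pos zero_less_numeral k(1))
  qed
  have win: "w \<in> set cs"
  proof -
    have ne: "2 * (k - 1) \<noteq> 2 * k - 1" using k2 by arith
    have "cs ! (2 * (k - 1)) = w" using csn[of "2 * (k - 1)"] k2 Fk1 ne by (simp add: h_def zF)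
    moreover have "2 * (k - 1) < length cs" using len k2 by simp
    ultimately show ?thesis by (metis nth_mem)
  qed
  have xout: "x0 \<notin> set cs"
  proof
    assume "x0 \<in> set cs"
    then obtain i where i: "i < 2 * k" "cs ! i = x0" using len by (metis in_set_conv_nth)
    have zx: "z (2 * k - 1) = x0"
    proof -
      have "2 * k - 1 = Suc (2 * (k - 1))" using k2 by simp
      then show ?thesis using zm[of "k - 1"] Fk1 m4w by simp
    qed
    show False
    proof (cases "i = 2 * k - 1")
      case True then show False using i csn ax by (simp add: h_def)
    next
      case False
      then have "z i = z (2 * k - 1)" using i csn zx by (simp add: h_def)
      then show False using zinj i False k2 by simp
    qed
  qed
  show ?thesis using cyc len uin win xout by auto
qed

context
  fixes V :: "'a set" and E :: "'a set set" and x0 u w :: 'a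
  assumes sg: "simple_graph V E" and ce: "cycle_extendable V E" and x0V: "x0 \<in> V"
    and Nx: "neighbours E x0 = {u, w}" and uw: "u \<noteq> w"
begin

lemma finV: "finite V" using sg by (simp add: simple_graph_def)

lemma edge: "{p, q} \<in> E \<Longrightarrow> p \<in> V \<and> q \<in> V \<and> p \<noteq> q"
proof -
  assume "{p, q} \<in> E"
  then obtain a b where ab: "a \<noteq> b" "a \<in> V" "b \<in> V" "{p, q} = {a, b}"
    using sg unfolding simple_graph_def by blast
  then have "(p = a \<and> q = b) \<or> (p = b \<and> q = a)" by (simp add: doubleton_eq_iff)
  then show ?thesis using ab by blast
qed

lemma eform: "e \<in> E \<Longrightarrow> \<exists>p q. e = {p, q} \<and> p \<noteq> q \<and> p \<in> V \<and> q \<in> V"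
  using sg unfolding simple_graph_def by blast

lemma finE: "finite E"
proof -
  have "E \<subseteq> Pow V" using eform by blast
  then show ?thesis using finV by (meson finite_Pow_iff finite_subset)
qed

lemma esym: "{p, q} \<in> E \<Longrightarrow> {q, p} \<in> E" by (simp add: insert_commute)

lemma nb_iff: "y \<in> neighbours E v \<longleftrightarrow> {v, y} \<in> E" by (simp add: neighbours_def)

lemma nbV: "neighbours E v \<subseteq> V" using edge by (auto simp: nb_iff)

lemma finN: "finite (neighbours E v)" using nbV finV by (meson finite_subset)

lemma xu: "{x0, u} \<in> E" "{x0, w} \<in> E" using Nx by (auto simp: nb_iff[symmetric])

lemma uV: "u \<in> V" "w \<in> V" "u \<noteq> x0" "w \<noteq> x0" using xu edge by blast+

lemma x0_edge: "{x0, y} \<in> E \<Longrightarrow> y = u \<or> y = w"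
  using Nx by (auto simp: nb_iff[symmetric])

lemma mc: "matching_covered V E" using ce by (simp add: cycle_extendable_def)

lemma pm_ex: "e \<in> E \<Longrightarrow> \<exists>M. perfect_matching V E M \<and> e \<in> M"
  using mc by (simp add: matching_covered_def)

lemma mate_x0: "perfect_matching V E M \<Longrightarrow> mate V M x0 = u \<or> mate V M x0 = w"
  using mate_edge[OF sg _ x0V] x0_edge by blast

lemma no_cycle:
  assumes "is_cycle V E cs" "even (length cs)" "u \<in> set cs" "w \<in> set cs" "x0 \<notin> set cs"
  shows False
proof -
  have "has_perfect_matching (V - set cs) (del_edges E (set cs))"
    using ce assms unfolding cycle_extendable_def by blast
  then obtain M where M: "perfect_matching (V - set cs) (del_edges E (set cs)) M"
    unfolding has_perfect_matching_def by blast
  have "x0 \<in> V - set cs" using assms x0V by simp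
  then obtain e where e: "e \<in> M" "x0 \<in> e" using M unfolding perfect_matching_def by blast
  then have e2: "e \<in> E" "e \<inter> set cs = {}" using M unfolding perfect_matching_def del_edges_def by auto
  then obtain p q where pq: "e = {p, q}" "p \<noteq> q" using eform by blast
  obtain y where y: "e = {x0, y}" using pq e by auto
  then have "y = u \<or> y = w" using x0_edge e2 by simp
  then show False using e2 y assms by auto
qed

lemma no_uw: "{u, w} \<notin> E"
proof
  assume "{u, w} \<in> E"
  then obtain M where M: "perfect_matching V E M" "{u, w} \<in> M" using pm_ex by blast
  have m: "{x0, mate V M x0} \<in> M" using mate_props(1)[OF sg M(1) x0V] .
  have wu: "{w, u} \<in> M" using M(2) by (simp add: insert_commute)
  show False
  proof (cases "mate V M x0 = u")
    case True
    then have "{u, x0} \<in> M" using m by (simp add: insert_commute)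
    then have "x0 = mate V M u" using mate_props(4)[OF sg M(1) uV(1)] by blast
    moreover have "w = mate V M u" using mate_props(4)[OF sg M(1) uV(1)] M(2) by blast
    ultimately show False using uV by simp
  next
    case False
    then have "mate V M x0 = w" using mate_x0 M by blast
    then have "{w, x0} \<in> M" using m by (simp add: insert_commute)
    then have "x0 = mate V M w" using mate_props(4)[OF sg M(1) uV(2)] by blast
    moreover have "u = mate V M w" using mate_props(4)[OF sg M(1) uV(2)] wu by blast
    ultimately show False using uV by simp
  qed
qed

lemma common_unique:
  assumes "{u, a} \<in> E" "{w, a} \<in> E" "{u, b} \<in> E" "{w, b} \<in> E" "a \<noteq> x0" "b \<noteq> x0"
  shows "a = b"
proof (rule ccontr)
  assume ab: "a \<noteq> b"
  let ?cs = "[u, a, w, b]"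
  have d: "u \<noteq> a" "w \<noteq> a" "u \<noteq> b" "w \<noteq> b" using assms edge by blast+
  have e4: "{a, w} \<in> E" "{b, u} \<in> E" using assms(2,3) by (simp_all add: insert_commute)
  have V4: "u \<in> V" "a \<in> V" "w \<in> V" "b \<in> V" using assms edge by blast+
  have ed: "{?cs ! i, ?cs ! ((i + 1) mod length ?cs)} \<in> E" if "i < length ?cs" for i
  proof -
    have "i = 0 \<or> i = 1 \<or> i = 2 \<or> i = 3" using that by auto
    then show ?thesis using assms(1,4) e4 by auto
  qed
  have dist: "distinct ?cs" using d ab uw by simp
  have cyc: "is_cycle V E ?cs"
    unfolding is_cycle_def using dist V4 ed by simp
  show False using no_cycle[OF cyc] assms uV by simp
qed

lemma other_nb:
  assumes "y = u \<and> y' = w \<or> y = w \<and> y' = u"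
  shows "\<exists>r. {y, r} \<in> E \<and> r \<noteq> x0"
proof -
  have "{x0, y'} \<in> E" using assms xu by blast
  then obtain M where M: "perfect_matching V E M" "{x0, y'} \<in> M" using pm_ex by blast
  have my: "mate V M x0 = y'" using mate_props(4)[OF sg M(1) x0V] M(2) by simp
  have yV: "y \<in> V" using assms uV by blast
  have "mate V M y \<noteq> x0"
  proof
    assume "mate V M y = x0"
    then have "mate V M x0 = y" using mate_invol[OF sg M(1)] by metis
    then show False using my assms uw by auto
  qed
  then show ?thesis using mate_edge[OF sg M(1) yV] by blast
qed

lemma deg3_aux:
  assumes pq: "p = u \<and> q = w \<or> p = w \<and> q = u"
    and ap: "{a, p} \<in> E" and aq: "{a, q} \<in> E" and ax: "a \<noteq> x0"
    and Na: "neighbours E a = {p, q, c}"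
    and M2: "perfect_matching V E M2" "mate V M2 a = c" "mate V M2 x0 = p"
    and pr: "{p, r} \<in> E" "r \<noteq> x0" "r \<noteq> a"
  shows False
proof -
  obtain M4 where M4: "perfect_matching V E M4" "{p, r} \<in> M4" using pm_ex pr by blast
  have pV: "p \<in> V" "q \<in> V" using pq uV by auto
  have aV: "a \<in> V" using ap edge by blast
  have m4p: "mate V M4 p = r" using mate_props(4)[OF sg M4(1) pV(1)] M4(2) by simp
  have m4x: "mate V M4 x0 = q"
  proof -
    have "mate V M4 x0 \<noteq> p"
    proof
      assume "mate V M4 x0 = p"
      then have "mate V M4 p = x0" using mate_invol[OF sg M4(1)] by metis
      then show False using m4p pr by simp
    qed
    then show ?thesis using mate_x0[OF M4(1)] pq by auto
  qed
  have m4q: "mate V M4 q = x0" using m4x mate_invol[OF sg M4(1)] by metis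
  have m4a: "mate V M4 a = c"
  proof -
    have "mate V M4 a \<in> neighbours E a" using mate_edge[OF sg M4(1) aV] by (simp add: nb_iff)
    moreover have "mate V M4 a \<noteq> p"
    proof
      assume "mate V M4 a = p"
      then have "mate V M4 p = a" using mate_invol[OF sg M4(1)] by metis
      then show False using m4p pr by simp
    qed
    moreover have "mate V M4 a \<noteq> q"
    proof
      assume "mate V M4 a = q"
      then have "mate V M4 q = a" using mate_invol[OF sg M4(1)] by metis
      then show False using m4q ax by simp
    qed
    ultimately show ?thesis using Na by auto
  qed
  have "\<exists>cs. is_cycle V E cs \<and> even (length cs) \<and> p \<in> set cs \<and> q \<in> set cs \<and> x0 \<notin> set cs"
  proof -
    have pqne: "p \<noteq> q" using pq uw by auto
    have m2eq: "mate V M2 a = mate V M4 a" using M2(2) m4a by simp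
    have ane: "a \<noteq> p" using ap edge by blast
    have m4pne: "mate V M4 p \<noteq> a" using m4p pr by simp
    have qa: "{q, a} \<in> E" using aq by (simp add: insert_commute)
    show ?thesis
      by (rule alt_cycle[OF finV mate_invol[OF sg M2(1)] mate_invol[OF sg M4(1)]
        mate_props(2)[OF sg M2(1)] mate_props(2)[OF sg M4(1)]
        mate_props(3)[OF sg M2(1)] mate_props(3)[OF sg M4(1)]
        mate_edge[OF sg M2(1)] mate_edge[OF sg M4(1)] pV(1) aV m4q M2(3) pqne m2eq ane m4pne
        qa ap ax])
  qed
  then obtain cs where "is_cycle V E cs" "even (length cs)" "p \<in> set cs" "q \<in> set cs" "x0 \<notin> set cs"
    by blast
  then show False using no_cycle pq by blast
qed

lemma deg3:
  assumes au: "{a, u} \<in> E" and aw: "{a, w} \<in> E" and ax: "a \<noteq> x0"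
    and Na: "neighbours E a = {u, w, c}"
    and ru: "{u, r} \<in> E" "r \<noteq> x0" "r \<noteq> a"
    and rw: "{w, r'} \<in> E" "r' \<noteq> x0" "r' \<noteq> a"
  shows False
proof -
  have "c \<in> neighbours E a" using Na by simp
  then have "{a, c} \<in> E" by (simp add: nb_iff)
  then obtain M2 where M2: "perfect_matching V E M2" "{a, c} \<in> M2" using pm_ex by blast
  have aV: "a \<in> V" using au edge by blast
  have m2a: "mate V M2 a = c" using mate_props(4)[OF sg M2(1) aV] M2(2) by simp
  show False
  proof (cases "mate V M2 x0 = u")
    case True
    show False by (rule deg3_aux[OF _ au aw ax Na M2(1) m2a True ru]) simp
  next
    case False
    then have "mate V M2 x0 = w" using mate_x0 M2 by blast
    have Na': "neighbours E a = {w, u, c}" using Na by (simp add: insert_commute)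
    show False by (rule deg3_aux[OF _ aw au ax Na' M2(1) m2a \<open>mate V M2 x0 = w\<close> rw]) simp
  qed
qed

abbreviation "SS \<equiv> {e \<in> E. x0 \<notin> e}"
abbreviation "cm \<equiv> contr_map E x0"
abbreviation "gg \<equiv> (\<lambda>e. contr_map E x0 ` e)"

lemma finS: "finite SS" using finE by simp

lemma cm_eq: "cm v = (if v = u \<or> v = w then x0 else v)"
  by (simp add: contr_map_def Nx)

lemma S_form: "e \<in> SS \<Longrightarrow> \<exists>p q. e = {p, q} \<and> p \<noteq> q \<and> p \<in> V \<and> q \<in> V \<and> p \<noteq> x0 \<and> q \<noteq> x0"
  using eform by blast

lemma pre_form:
  assumes e': "e' \<in> SS" and g: "gg e' = e"
  shows "(x0 \<notin> e \<and> e' = e) \<or>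
    (\<exists>y. e = {x0, y} \<and> y \<noteq> x0 \<and> y \<noteq> u \<and> y \<noteq> w \<and> y \<in> V \<and> (e' = {u, y} \<or> e' = {w, y}))"
proof -
  obtain p q where pq: "e' = {p, q}" "p \<noteq> q" "p \<in> V" "q \<in> V" "p \<noteq> x0" "q \<noteq> x0"
    using S_form[OF e'] by blast
  have ge: "e = {cm p, cm q}" using g pq by simp
  have nuw: "\<not> ((p = u \<or> p = w) \<and> (q = u \<or> q = w))"
  proof
    assume "(p = u \<or> p = w) \<and> (q = u \<or> q = w)"
    then have "{p, q} = {u, w} \<or> {p, q} = {w, u}" using pq(2) by auto
    then have "{u, w} \<in> E" using e' pq(1) by (auto simp: insert_commute)
    then show False using no_uw by simp
  qed
  show ?thesis
  proof (cases "p = u \<or> p = w")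
    case True
    then have "q \<noteq> u" "q \<noteq> w" using nuw by auto
    then have "e = {x0, q}" using ge True by (simp add: cm_eq)
    then show ?thesis using True pq \<open>q \<noteq> u\<close> \<open>q \<noteq> w\<close> by blast
  next
    case False
    show ?thesis
    proof (cases "q = u \<or> q = w")
      case True
      then have "e = {x0, p}" using ge False by (simp add: cm_eq insert_commute)
      moreover have "e' = {q, p}" using pq by (simp add: insert_commute)
      ultimately show ?thesis using True False pq by blast
    next
      case False2: False
      then have "e = e'" using ge False pq by (simp add: cm_eq)
      then show ?thesis using pq by simp
    qed
  qed
qed

lemma gg_card:
  assumes e': "e' \<in> SS"
  shows "\<exists>p q. gg e' = {p, q} \<and> p \<noteq> q \<and> p \<in> V - {u, w} \<and> q \<in> V - {u, w}"
proof -
  obtain p q where pq: "e' = {p, q}" "p \<noteq> q" "p \<in> V" "q \<in> V" "p \<noteq> x0" "q \<noteq> x0"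
    using S_form[OF e'] by blast
  have "(x0 \<notin> gg e' \<and> e' = gg e') \<or>
    (\<exists>y. gg e' = {x0, y} \<and> y \<noteq> x0 \<and> y \<noteq> u \<and> y \<noteq> w \<and> y \<in> V \<and> (e' = {u, y} \<or> e' = {w, y}))"
    using pre_form[OF e' refl] .
  then show ?thesis
  proof
    assume h: "x0 \<notin> gg e' \<and> e' = gg e'"
    have x: "x0 \<notin> {cm p, cm q}" using conjunct1[OF h] pq(1) by simp
    have "p \<noteq> u" "p \<noteq> w" "q \<noteq> u" "q \<noteq> w" using x by (auto simp: cm_eq split: if_splits)
    then have "gg e' = {p, q}" using pq(1) by (simp add: cm_eq)
    then show ?thesis using \<open>p \<noteq> u\<close> \<open>p \<noteq> w\<close> \<open>q \<noteq> u\<close> \<open>q \<noteq> w\<close> pq by blast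
  next
    assume "\<exists>y. gg e' = {x0, y} \<and> y \<noteq> x0 \<and> y \<noteq> u \<and> y \<noteq> w \<and> y \<in> V \<and> (e' = {u, y} \<or> e' = {w, y})"
    then show ?thesis using x0V uV by blast
  qed
qed

lemma card_gg: "e' \<in> SS \<Longrightarrow> card (gg e') = 2"
  using gg_card by fastforce

lemma count_eq: "count (contr_E E x0) e = card {e' \<in> SS. gg e' = e}"
proof -
  have "count (contr_E E x0) e = (\<Sum>y\<in>gg -` {e} \<inter> SS. count (mset_set SS) y)"
    unfolding contr_E_def count_image_mset using finS by simp
  also have "\<dots> = (\<Sum>y\<in>gg -` {e} \<inter> SS. 1)"
    by (rule sum.cong) (use finS in auto)
  also have "\<dots> = card (gg -` {e} \<inter> SS)" by simp
  also have "gg -` {e} \<inter> SS = {e' \<in> SS. gg e' = e}" by auto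
  finally show ?thesis .
qed

lemma set_contr: "set_mset (contr_E E x0) = gg ` SS"
  unfolding contr_E_def using finS by simp

lemma pre_sub:
  "{e' \<in> SS. gg e' = e} \<subseteq> {e} \<or>
   (\<exists>y. e = {x0, y} \<and> y \<noteq> x0 \<and> {e' \<in> SS. gg e' = e} \<subseteq> {{u, y}, {w, y}})"
proof (cases "{e' \<in> SS. gg e' = e} = {}")
  case True show ?thesis by (rule disjI1, subst True, rule empty_subsetI)
next
  case False
  then obtain e1 where e1: "e1 \<in> SS" "gg e1 = e" by blast
  from pre_form[OF e1] show ?thesis
  proof
    assume h: "x0 \<notin> e \<and> e1 = e"
    have "e' = e" if "e' \<in> SS" "gg e' = e" for e'
      using pre_form[OF that] h by auto
    then show ?thesis by blast
  next
    assume "\<exists>y. e = {x0, y} \<and> y \<noteq> x0 \<and> y \<noteq> u \<and> y \<noteq> w \<and> y \<in> V \<and> (e1 = {u, y} \<or> e1 = {w, y})"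
    then obtain y where y: "e = {x0, y}" "y \<noteq> x0" by blast
    have "e' \<in> {{u, y}, {w, y}}" if "e' \<in> SS" "gg e' = e" for e'
    proof -
      from pre_form[OF that] show ?thesis
      proof
        assume "x0 \<notin> e \<and> e' = e" then show ?thesis using y by simp
      next
        assume "\<exists>y'. e = {x0, y'} \<and> y' \<noteq> x0 \<and> y' \<noteq> u \<and> y' \<noteq> w \<and> y' \<in> V \<and> (e' = {u, y'} \<or> e' = {w, y'})"
        then obtain y' where y': "e = {x0, y'}" "y' \<noteq> x0" "e' = {u, y'} \<or> e' = {w, y'}" by blast
        have "y' = y" using y y' by (auto simp: doubleton_eq_iff)
        then show ?thesis using y' by simp
      qed
    qed
    then show ?thesis using y by blast
  qed
qed

lemma count_le2: "count (contr_E E x0) e \<le> 2"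
proof -
  from pre_sub show ?thesis
  proof
    assume "{e' \<in> SS. gg e' = e} \<subseteq> {e}"
    then have "card {e' \<in> SS. gg e' = e} \<le> card {e}" by (rule card_mono[rotated]) simp
    then show ?thesis by (simp add: count_eq)
  next
    assume "\<exists>y. e = {x0, y} \<and> y \<noteq> x0 \<and> {e' \<in> SS. gg e' = e} \<subseteq> {{u, y}, {w, y}}"
    then obtain y where "{e' \<in> SS. gg e' = e} \<subseteq> {{u, y}, {w, y}}" by blast
    then have "card {e' \<in> SS. gg e' = e} \<le> card {{u, y}, {w, y}}" by (rule card_mono[rotated]) simp
    also have "\<dots> \<le> 2" by (simp add: card_insert_if)
    finally show ?thesis by (simp add: count_eq)
  qed
qed

lemma count_ge2:
  assumes "2 \<le> count (contr_E E x0) e"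
  shows "\<exists>y. e = {x0, y} \<and> y \<noteq> x0 \<and> {u, y} \<in> E \<and> {w, y} \<in> E"
proof -
  let ?P = "{e' \<in> SS. gg e' = e}"
  have c: "2 \<le> card ?P" using assms by (simp add: count_eq)
  from pre_sub show ?thesis
  proof
    assume "?P \<subseteq> {e}"
    then have "card ?P \<le> card {e}" by (rule card_mono[rotated]) simp
    then show ?thesis using c by simp
  next
    assume "\<exists>y. e = {x0, y} \<and> y \<noteq> x0 \<and> ?P \<subseteq> {{u, y}, {w, y}}"
    then obtain y where y: "e = {x0, y}" "y \<noteq> x0" "?P \<subseteq> {{u, y}, {w, y}}" by blast
    have "{u, y} \<in> ?P"
    proof (rule ccontr)
      assume "{u, y} \<notin> ?P"
      then have "?P \<subseteq> {{w, y}}" using y by blast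
      then have "card ?P \<le> card {{w, y}}" by (rule card_mono[rotated]) simp
      then show False using c by simp
    qed
    moreover have "{w, y} \<in> ?P"
    proof (rule ccontr)
      assume "{w, y} \<notin> ?P"
      then have "?P \<subseteq> {{u, y}}" using y by blast
      then have "card ?P \<le> card {{u, y}}" by (rule card_mono[rotated]) simp
      then show False using c by simp
    qed
    ultimately show ?thesis using y by blast
  qed
qed

lemma part1: "mg_simple (contr_E E x0) \<or> mg_exactly_two_multiple_edges (contr_E E x0)"
proof (cases "{e. 2 \<le> count (contr_E E x0) e} = {}")
  case True
  have "card e = 2 \<and> count (contr_E E x0) e = 1" if "e \<in># contr_E E x0" for e
  proof -
    have "e \<in> gg ` SS" using that set_contr by simp
    then have "card e = 2" using card_gg by blast
    moreover have c0: "0 < count (contr_E E x0) e" using that by (simp only: count_greater_zero_iff)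
    moreover have nc: "\<not> 2 \<le> count (contr_E E x0) e" using True by blast
    ultimately show ?thesis by linarith
  qed
  then show ?thesis unfolding mg_simple_def by blast
next
  case False
  then obtain e0 where e0: "2 \<le> count (contr_E E x0) e0" by blast
  obtain y0 where y0: "e0 = {x0, y0}" "y0 \<noteq> x0" "{u, y0} \<in> E" "{w, y0} \<in> E"
    using count_ge2[OF e0] by blast
  have "{e. 2 \<le> count (contr_E E x0) e} = {e0}"
  proof
    show "{e0} \<subseteq> {e. 2 \<le> count (contr_E E x0) e}" using e0 by simp
    show "{e. 2 \<le> count (contr_E E x0) e} \<subseteq> {e0}"
    proof
      fix e assume "e \<in> {e. 2 \<le> count (contr_E E x0) e}"
      then obtain y where y: "e = {x0, y}" "y \<noteq> x0" "{u, y} \<in> E" "{w, y} \<in> E"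
        using count_ge2 by blast
      have "y = y0" using common_unique[OF y(3,4) y0(3,4) y(2) y0(2)] .
      then show "e \<in> {e0}" using y y0 by simp
    qed
  qed
  then show ?thesis unfolding mg_exactly_two_multiple_edges_def using count_le2 by simp
qed

lemma US_eq: "underlying_simple (contr_E E x0) = gg ` SS"
  unfolding underlying_simple_def set_contr
proof (intro equalityI subsetI)
  fix e assume "e \<in> gg ` SS"
  then obtain e' where "e' \<in> SS" "e = gg e'" by blast
  then show "e \<in> {e \<in> gg ` SS. card e = 2}" using card_gg[of e'] by simp
qed simp

lemma CV_eq: "contr_V V E x0 = V - {u, w}"
  by (simp add: contr_V_def Nx)

lemma J_simple: "simple_graph (V - {u, w}) (gg ` SS)"
  unfolding simple_graph_def
proof (intro conjI ballI)
  show "finite (V - {u, w})" using finV by simp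
  fix e assume "e \<in> gg ` SS"
  then obtain e' where "e' \<in> SS" "e = gg e'" by blast
  then show "\<exists>a b. a \<noteq> b \<and> a \<in> V - {u, w} \<and> b \<in> V - {u, w} \<and> e = {a, b}"
    using gg_card[of e'] by blast
qed

lemma nbJ_V: "neighbours (gg ` SS) v \<subseteq> V - {u, w}"
proof
  fix y assume "y \<in> neighbours (gg ` SS) v"
  then have "{v, y} \<in> gg ` SS" by (simp add: neighbours_def)
  then obtain e' where "e' \<in> SS" "{v, y} = gg e'" by blast
  then obtain p q where "{v, y} = {p, q}" "p \<in> V - {u, w}" "q \<in> V - {u, w}"
    using gg_card[of e'] by metis
  then show "y \<in> V - {u, w}" by (auto simp: doubleton_eq_iff)
qed

lemma finNJ: "finite (neighbours (gg ` SS) v)"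
  using nbJ_V finV by (meson finite_Diff finite_subset)

lemma nbJ_x0:
  assumes p: "p = u \<or> p = w" and e: "{p, y} \<in> E" and y: "y \<noteq> x0"
  shows "y \<in> neighbours (gg ` SS) x0"
proof -
  have py: "p \<noteq> y" using e edge by blast
  have yuw: "y \<noteq> u" "y \<noteq> w"
  proof -
    show "y \<noteq> u"
    proof
      assume "y = u"
      then have "p = w" using p py by auto
      then have "{u, w} \<in> E" using e \<open>y = u\<close> by (simp add: insert_commute)
      then show False using no_uw by simp
    qed
    show "y \<noteq> w"
    proof
      assume "y = w"
      then have "p = u" using p py by auto
      then have "{u, w} \<in> E" using e \<open>y = w\<close> by simp
      then show False using no_uw by simp
    qed
  qed
  have pS: "{p, y} \<in> SS" using e y p uV by auto
  have "gg {p, y} = {x0, y}" using p yuw by (auto simp: cm_eq)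
  then have "{x0, y} \<in> gg ` SS" using pS by (metis image_eqI)
  then show ?thesis by (simp add: neighbours_def)
qed

lemma nbJ_other:
  assumes v: "v \<in> V - {u, w}" "v \<noteq> x0"
  shows "neighbours (gg ` SS) v = cm ` neighbours E v"
proof
  show "neighbours (gg ` SS) v \<subseteq> cm ` neighbours E v"
  proof
    fix y assume "y \<in> neighbours (gg ` SS) v"
    then have "{v, y} \<in> gg ` SS" by (simp add: neighbours_def)
    then obtain e' where e': "e' \<in> SS" "{v, y} = gg e'" by blast
    obtain p q where pq: "e' = {p, q}" "p \<noteq> q" "p \<in> V" "q \<in> V" "p \<noteq> x0" "q \<noteq> x0"
      using S_form[OF e'(1)] by blast
    have g: "{v, y} = {cm p, cm q}" using e' pq by simp
    have cmv: "cm z = v \<Longrightarrow> z = v" for z using v by (auto simp: cm_eq split: if_splits)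
    show "y \<in> cm ` neighbours E v"
    proof (cases "cm p = v")
      case True
      then have "p = v" using cmv by blast
      have "y = cm q" using g True by (auto simp: doubleton_eq_iff)
      moreover have "q \<in> neighbours E v" using e' pq \<open>p = v\<close> by (simp add: nb_iff)
      ultimately show ?thesis by blast
    next
      case False
      then have "cm q = v" "y = cm p" using g by (auto simp: doubleton_eq_iff)
      then have "q = v" using cmv by blast
      have "p \<in> neighbours E v" using e' pq \<open>q = v\<close> by (simp add: nb_iff insert_commute)
      then show ?thesis using \<open>y = cm p\<close> by blast
    qed
  qed
  show "cm ` neighbours E v \<subseteq> neighbours (gg ` SS) v"
  proof
    fix y assume "y \<in> cm ` neighbours E v"
    then obtain q where q: "q \<in> neighbours E v" "y = cm q" by blast
    have e: "{v, q} \<in> E" using q by (simp add: nb_iff)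
    have "q \<noteq> x0"
    proof
      assume "q = x0"
      then have "{x0, v} \<in> E" using e by (simp add: insert_commute)
      then have "v = u \<or> v = w" using x0_edge by blast
      then show False using v by blast
    qed
    then have "{v, q} \<in> SS" using e v by simp
    moreover have "gg {v, q} = {v, y}" using q v by (simp add: cm_eq)
    ultimately have "{v, y} \<in> gg ` SS" by (metis image_eqI)
    then show "y \<in> neighbours (gg ` SS) v" by (simp add: neighbours_def)
  qed
qed

lemma deg_same:
  assumes v: "v \<in> V - {u, w}" "v \<noteq> x0" and nc: "\<not> ({u, v} \<in> E \<and> {w, v} \<in> E)"
  shows "degree (gg ` SS) v = degree E v"
proof -
  have "inj_on cm (neighbours E v)"
  proof (rule inj_onI)
    fix y1 y2 assume y: "y1 \<in> neighbours E v" "y2 \<in> neighbours E v" "cm y1 = cm y2"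
    have nx: "y1 \<noteq> x0" "y2 \<noteq> x0"
    proof -
      have "x0 \<notin> neighbours E v"
      proof
        assume "x0 \<in> neighbours E v"
        then have "{x0, v} \<in> E" by (simp add: nb_iff insert_commute)
        then show False using x0_edge v by blast
      qed
      then show "y1 \<noteq> x0" "y2 \<noteq> x0" using y by auto
    qed
    show "y1 = y2"
    proof (rule ccontr)
      assume ne: "y1 \<noteq> y2"
      have "(y1 = u \<or> y1 = w) \<and> (y2 = u \<or> y2 = w)"
        using y(3) nx ne by (auto simp: cm_eq split: if_splits)
      then have "u \<in> neighbours E v \<and> w \<in> neighbours E v" using y ne by auto
      then show False using nc by (simp add: nb_iff insert_commute)
    qed
  qed
  then show ?thesis unfolding degree_def using nbJ_other[OF v] by (simp add: card_image)
qed

lemma deg_u3: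
  assumes irr: "irreducible V E" and y: "y = u \<or> y = w"
  shows "3 \<le> card (neighbours E y)"
proof -
  have "degree E x0 = 2" using Nx uw by (simp add: degree_def)
  moreover have "{x0, y} \<in> E" using y xu by blast
  ultimately have "degree E y \<noteq> 2" using irr unfolding irreducible_def by blast
  moreover obtain r where r: "{y, r} \<in> E" "r \<noteq> x0"
    using other_nb[of y "if y = u then w else u"] y uw by auto
  have "{x0, r} \<subseteq> neighbours E y" using r \<open>{x0, y} \<in> E\<close> by (auto simp: nb_iff insert_commute)
  then have "card {x0, r} \<le> card (neighbours E y)" using finN by (rule card_mono[rotated])
  then have "2 \<le> card (neighbours E y)" using r by simp
  ultimately show ?thesis by (simp add: degree_def)
qed

lemma deg_x0:
  assumes irr: "irreducible V E"
  shows "degree (gg ` SS) x0 \<noteq> 2"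
proof -
  let ?A = "neighbours E u - {x0}" and ?B = "neighbours E w - {x0}"
  have xA: "x0 \<in> neighbours E u" "x0 \<in> neighbours E w"
    using esym[OF xu(1)] esym[OF xu(2)] by (simp_all only: nb_iff)
  have d3: "3 \<le> card (neighbours E u)" "3 \<le> card (neighbours E w)"
    using deg_u3[OF irr, of u] deg_u3[OF irr, of w] by simp_all
  have "card ?A = card (neighbours E u) - 1" "card ?B = card (neighbours E w) - 1"
    using card_Diff_singleton[OF xA(1)] card_Diff_singleton[OF xA(2)] by simp_all
  then have cA: "2 \<le> card ?A" and cB: "2 \<le> card ?B" using d3 by linarith+
  have finA: "finite ?A" "finite ?B" using finN by auto
  have cI: "card (?A \<inter> ?B) \<le> 1"
  proof -
    have "\<forall>x\<in>?A \<inter> ?B. \<forall>y\<in>?A \<inter> ?B. x = y"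
    proof (intro ballI)
      fix x y assume x: "x \<in> ?A \<inter> ?B" and y: "y \<in> ?A \<inter> ?B"
      have x1: "{u, x} \<in> E" "{w, x} \<in> E" "x \<noteq> x0" using x by (simp_all add: nb_iff)
      have y1: "{u, y} \<in> E" "{w, y} \<in> E" "y \<noteq> x0" using y by (simp_all add: nb_iff)
      show "x = y" by (rule common_unique[OF x1(1,2) y1(1,2) x1(3) y1(3)])
    qed
    note all = this
    have fin: "finite (?A \<inter> ?B)" by (rule finite_Int[OF disjI1[OF finA(1)]])
    have "card (?A \<inter> ?B) \<le> Suc 0" using card_le_Suc0_iff_eq[OF fin] all by blast
    then show ?thesis by simp
  qed
  have "card (?A \<union> ?B) + card (?A \<inter> ?B) = card ?A + card ?B" using card_Un_Int[OF finA] by simp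
  then have c3: "3 \<le> card (?A \<union> ?B)" using cA cB cI by linarith
  have "?A \<union> ?B \<subseteq> neighbours (gg ` SS) x0"
  proof
    fix y assume "y \<in> ?A \<union> ?B"
    then have "({u, y} \<in> E \<or> {w, y} \<in> E) \<and> y \<noteq> x0" by (auto simp: nb_iff)
    then show "y \<in> neighbours (gg ` SS) x0" using nbJ_x0[of u y] nbJ_x0[of w y] by blast
  qed
  then have "card (?A \<union> ?B) \<le> card (neighbours (gg ` SS) x0)" using finNJ by (rule card_mono[rotated])
  then show ?thesis using c3 by (simp add: degree_def)
qed

lemma deg_common:
  assumes irr: "irreducible V E" and v: "v \<in> V - {u, w}" "v \<noteq> x0"
    and cu: "{u, v} \<in> E" and cw: "{w, v} \<in> E"
  shows "degree (gg ` SS) v \<noteq> 2"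
proof
  assume d2: "degree (gg ` SS) v = 2"
  let ?N = "neighbours E v"
  have uN: "u \<in> ?N" "w \<in> ?N" using cu cw by (auto simp: nb_iff insert_commute)
  have xN: "x0 \<notin> ?N"
  proof
    assume "x0 \<in> ?N"
    then have "{x0, v} \<in> E" by (simp add: nb_iff insert_commute)
    then show False using x0_edge v by blast
  qed
  have img: "cm ` ?N = insert x0 (?N - {u, w})"
  proof
    show "cm ` ?N \<subseteq> insert x0 (?N - {u, w})" by (auto simp: cm_eq)
    show "insert x0 (?N - {u, w}) \<subseteq> cm ` ?N"
    proof
      fix y assume "y \<in> insert x0 (?N - {u, w})"
      then show "y \<in> cm ` ?N"
      proof
        assume "y = x0"
        then have "y = cm u" by (simp add: cm_eq)
        then show ?thesis using uN by blast
      next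
        assume "y \<in> ?N - {u, w}"
        then have "y = cm y" "y \<in> ?N" by (auto simp: cm_eq)
        then show ?thesis by blast
      qed
    qed
  qed
  have finD: "finite (?N - {u, w})" using finN by simp
  have "card (insert x0 (?N - {u, w})) = 2" using d2 nbJ_other[OF v] img by (simp add: degree_def)
  then have "card (?N - {u, w}) = 1" using finD xN by simp
  then obtain c where c: "?N - {u, w} = {c}" by (meson card_1_singletonE)
  have Nv: "?N = {u, w, c}" using c uN by auto
  have ex: "\<exists>r. {y, r} \<in> E \<and> r \<noteq> x0 \<and> r \<noteq> v" if y: "y = u \<or> y = w" for y
  proof (rule ccontr)
    assume "\<not> ?thesis"
    then have "neighbours E y \<subseteq> {x0, v}" by (auto simp: nb_iff)
    then have "card (neighbours E y) \<le> card {x0, v}" by (rule card_mono[rotated]) simp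
    also have "\<dots> \<le> 2" by (simp add: card_insert_if)
    finally show False using deg_u3[OF irr y] by simp
  qed
  obtain r where r: "{u, r} \<in> E" "r \<noteq> x0" "r \<noteq> v" using ex by blast
  obtain r' where r': "{w, r'} \<in> E" "r' \<noteq> x0" "r' \<noteq> v" using ex by blast
  have vu: "{v, u} \<in> E" "{v, w} \<in> E" using cu cw by (simp_all add: insert_commute)
  show False using deg3[OF vu v(2) Nv r r'] .
qed

lemma part2:
  assumes irr: "irreducible V E"
  shows "irreducible (contr_V V E x0) (underlying_simple (contr_E E x0))"
  unfolding US_eq CV_eq irreducible_def
proof (intro conjI allI impI J_simple)
  fix a b assume ab: "{a, b} \<in> gg ` SS"
  from ab obtain e' where e'0: "e' \<in> SS" "{a, b} = gg e'" by (rule imageE)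
  have e': "e' \<in> SS" "gg e' = {a, b}" using e'0 by simp_all
  from gg_card[OF e'(1)] obtain p q where pq0: "gg e' = {p, q}" "p \<noteq> q" "p \<in> V - {u, w}" "q \<in> V - {u, w}"
    by blast
  have pq: "{a, b} = {p, q}" "p \<noteq> q" "p \<in> V - {u, w}" "q \<in> V - {u, w}" using pq0 e'(2) by simp_all
  have "(a = p \<and> b = q) \<or> (a = q \<and> b = p)" using pq(1) by (simp add: doubleton_eq_iff)
  then have abV: "a \<in> V - {u, w}" "b \<in> V - {u, w}" using pq by blast+
  have irrG: "\<And>a b. {a, b} \<in> E \<Longrightarrow> \<not> (degree E a = 2 \<and> degree E b = 2)"
    using irr unfolding irreducible_def by blast
  show "\<not> (degree (gg ` SS) a = 2 \<and> degree (gg ` SS) b = 2)"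
  proof (cases "a = x0 \<or> b = x0")
    case True
    then show ?thesis using deg_x0[OF irr] by blast
  next
    case False
    then have ax: "a \<noteq> x0" "b \<noteq> x0" by simp_all
    have "e' = {a, b}"
    proof -
      from pre_form[OF e'(1) e'(2)] show ?thesis
      proof
        assume "x0 \<notin> {a, b} \<and> e' = {a, b}" then show ?thesis by blast
      next
        assume "\<exists>y. {a, b} = {x0, y} \<and> y \<noteq> x0 \<and> y \<noteq> u \<and> y \<noteq> w \<and> y \<in> V \<and> (e' = {u, y} \<or> e' = {w, y})"
        then obtain y where "{a, b} = {x0, y}" by blast
        then have "x0 \<in> {a, b}" by (metis insertI1)
        then show ?thesis using ax by blast
      qed
    qed
    then have abE: "{a, b} \<in> E" using e'(1) by blast
    show ?thesis
    proof (cases "{u, a} \<in> E \<and> {w, a} \<in> E")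
      case True
      then have "degree (gg ` SS) a \<noteq> 2" using deg_common[OF irr abV(1) ax(1)] by blast
      then show ?thesis by blast
    next
      case na: False
      show ?thesis
      proof (cases "{u, b} \<in> E \<and> {w, b} \<in> E")
        case True
        then have "degree (gg ` SS) b \<noteq> 2" using deg_common[OF irr abV(2) ax(2)] by blast
        then show ?thesis by blast
      next
        case nb: False
        have "degree (gg ` SS) a = degree E a" by (rule deg_same[OF abV(1) ax(1) na])
        moreover have "degree (gg ` SS) b = degree E b" by (rule deg_same[OF abV(2) ax(2) nb])
        ultimately show ?thesis using irrG[OF abE] by simp
      qed
    qed
  qed
qed

end

theorem corollary5p2:
  fixes V :: "'a set" and E :: "'a set set" and x0 :: 'a
  assumes "simple_graph V E"
    and "cycle_extendable V E"
    and "x0 \<in> V"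
    and "degree E x0 = 2"
  shows "(mg_simple (contr_E E x0) \<or> mg_exactly_two_multiple_edges (contr_E E x0)) \<and>
         (irreducible V E \<longrightarrow>
            irreducible (contr_V V E x0) (underlying_simple (contr_E E x0)))"
proof -
  have "card (neighbours E x0) = 2" using assms(4) by (simp add: degree_def)
  then obtain u w where uw: "neighbours E x0 = {u, w}" "u \<noteq> w" by (meson card_2_iff)
  show ?thesis
    using part1[OF assms(1,2,3) uw] part2[OF assms(1,2,3) uw] by blast
qed

end
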